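(* Let $t>0$. Consider a vehicle and a target with relative state $\Upsilon(k)=(\bm{q}(k),\bm{\vartheta}(k))\in\mathbb{R}^6$ (relative position and relative velocity in the world frame) evolving as $$\Upsilon(k+1)=A\Upsilon(k)+B\big(\bm{R}(k)\,{}^{b}\bm{u}_1(k)-\bar{\bm{u}}(k)\big),\quad A=\begin{bmatrix} I_3& tI_3\\ 0& I_3\end{bmatrix},\ B=\begin{bmatrix}\tfrac12 t^2 I_3\\ tI_3\end{bmatrix},$$ where $\bm{R}(k)\in SO(3)$ is the vehicle orientation and the target acceleration $\bar{\bm{u}}(k)$ is zero-mean Gaussian with covariance $W$ satisfying $\hat\sigma I_3\le W\le \check\sigma I_3$ for some $\hat\sigma,\check\sigma>0$, independent of the other quantities at time $k$. Let $\hat\Upsilon(k)=(\hat{\bm{q}}(k),\hat{\bm{\vartheta}}(k))$ be an estimate of $\Upsilon(k)$, let ${}^{b}\bm{q}^*\in\mathbb{R}^3$ be a desired relative position in the body frame, and apply the tracking control $${}^{b}\bm{u}_1(k)=-\frac{2\alpha}{t^2}\big(\bm{R}^{-1}(k)\hat{\bm{q}}(k)-{}^{b}\bm{q}^*\big)-\frac{2}{t}\bm{R}^{-1}(k)\hat{\bm{\vartheta}}(k).$$ Define the tracking error $\bm{e}(k)=\bm{q}(k)-\bm{R}(k)\,{}^{b}\bm{q}^*$ and $\bar\alpha=(\alpha I_3,\ tI_3)\in\mathbb{R}^{3\times 6}$, and assume $$\sigma:=\sup_k 2\,\mathbf{E}\big\{\|\bar\alpha(\Upsilon(k)-\hat\Upsilon(k))+(\bm{R}(k)-\bm{R}(k+1))\,{}^{b}\bm{q}^*\|^2\big\}<\infty.$$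 If $\alpha\in\big(1-\tfrac{1}{\sqrt2},\,1+\tfrac{1}{\sqrt2}\big)$, then $2(1-\alpha)^2-1<0$ and the tracking error is bounded in mean square: $\mathbf{E}\{\|\bm{e}(k)\|^2\}$ remains bounded for all $k$ (the vehicle maintains the desired relative position ${}^{b}\bm{q}^*$ up to a bounded error).
   Context: $SO(3)$ denotes the group of $3\times 3$ rotation matrices. $\mathbf{E}$ denotes expectation. The estimate $\hat\Upsilon(k)$ is produced by a Kalman filter, but the claim only uses the finiteness of $\sigma$. *)

theory Defs
  imports "HOL-Probability.Probability"
begin

definition SO3 :: "(real^3^3) set" where
  "SO3 = {Q. rotation_matrix Q}"

definition loewner_between :: "real \<Rightarrow> real^3^3 \<Rightarrow> real \<Rightarrow> bool" where
  "loewner_between a W b \<longleftrightarrow> transpose W = W \<and>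
     (\<forall>x::real^3. a * (x \<bullet> x) \<le> x \<bullet> (W *v x) \<and> x \<bullet> (W *v x) \<le> b * (x \<bullet> x))"

text \<open>A random vector X in R^3 is zero-mean Gaussian with covariance W (W positive definite):
  every nonzero linear functional of X is univariate normal with mean 0 and variance v' W v
  (Cramer-Wold characterisation of the multivariate normal law).\<close>
definition gaussian_vec :: "'a measure \<Rightarrow> ('a \<Rightarrow> real^3) \<Rightarrow> real^3^3 \<Rightarrow> bool" where
  "gaussian_vec M X W \<longleftrightarrow> X \<in> borel_measurable M \<and>
     (\<forall>v::real^3. v \<noteq> 0 \<longrightarrow>
        distributed M lborel (\<lambda>\<omega>. v \<bullet> X \<omega>) (normal_density 0 (sqrt (v \<bullet> (W *v v)))))"

definition track_ctrl :: "real \<Rightarrow> real \<Rightarrow> real^3 \<Rightarrow> real^3^3 \<Rightarrow> real^3 \<Rightarrow> real^3 \<Rightarrow> real^3" where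
  "track_ctrl t \<alpha> qs R qh vh =
     - ((2 * \<alpha> / t\<^sup>2) *\<^sub>R (matrix_inv R *v qh - qs)) - (2 / t) *\<^sub>R (matrix_inv R *v vh)"

text \<open>Independence of two random variables with possibly different (Borel) codomains
  (the library's indep_var forces equal codomain types).\<close>
definition indep_rv :: "'a measure \<Rightarrow> ('a \<Rightarrow> 'b::topological_space) \<Rightarrow> ('a \<Rightarrow> 'c::topological_space) \<Rightarrow> bool" where
  "indep_rv M X Y \<longleftrightarrow> X \<in> borel_measurable M \<and> Y \<in> borel_measurable M \<and>
     (\<forall>A\<in>sets borel. \<forall>B\<in>sets borel.
        measure M (X -` A \<inter> Y -` B \<inter> space M) =
        measure M (X -` A \<inter> space M) * measure M (Y -` B \<inter> space M))"

end

theory Submission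
  imports Defs
begin

lemma gauss_comp:
  assumes g: "gaussian_vec M X W" and Wb: "loewner_between a W b" and a: "a > 0"
    and v: "v \<noteq> 0"
  shows "(\<integral>\<^sup>+ \<omega>. ennreal ((v \<bullet> X \<omega>)\<^sup>2) \<partial>M) = ennreal (v \<bullet> (W *v v))"
proof -
  have pos: "v \<bullet> (W *v v) > 0"
  proof -
    have "a * (v \<bullet> v) \<le> v \<bullet> (W *v v)" using Wb by (auto simp: loewner_between_def)
    moreover have "v \<bullet> v > 0" using v by simp
    ultimately show ?thesis using a by (smt (verit) mult_pos_pos)
  qed
  define s where "s = sqrt (v \<bullet> (W *v v))"
  have s: "s > 0" using pos by (simp add: s_def)
  have s2: "s\<^sup>2 = v \<bullet> (W *v v)" using pos by (simp add: s_def)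
  have D: "distributed M lborel (\<lambda>\<omega>. v \<bullet> X \<omega>) (normal_density 0 s)"
    using g v by (simp add: gaussian_vec_def s_def)
  have "(\<integral>\<^sup>+ \<omega>. ennreal ((v \<bullet> X \<omega>)\<^sup>2) \<partial>M)
      = (\<integral>\<^sup>+ x. ennreal (normal_density 0 s x) * ennreal (x\<^sup>2) \<partial>lborel)"
    by (rule distributed_nn_integral[OF D, symmetric]) simp
  also have "\<dots> = (\<integral>\<^sup>+ x. ennreal (normal_density 0 s x * x\<^sup>2) \<partial>lborel)"
    by (simp add: ennreal_mult')
  also have "\<dots> = ennreal (\<integral> x. normal_density 0 s x * x\<^sup>2 \<partial>lborel)"
    using integrable_normal_moment[OF s, of 0 2]
    by (intro nn_integral_eq_integral) auto
  also have "(\<integral> x. normal_density 0 s x * x\<^sup>2 \<partial>lborel) = s\<^sup>2"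
    using integral_normal_moment_even[OF s, of 0 1] by (simp add: power2_eq_square)
  finally show ?thesis using s2 by simp
qed


lemma gauss_norm:
  assumes g: "gaussian_vec M X W" and Wb: "loewner_between a W b" and a: "a > 0"
  shows "(\<integral>\<^sup>+ \<omega>. ennreal ((norm (X \<omega>))\<^sup>2) \<partial>M) = ennreal (\<Sum>i\<in>UNIV. axis i 1 \<bullet> (W *v axis i (1::real)))"
proof -
  have Xm[measurable]: "X \<in> borel_measurable M" using g by (simp add: gaussian_vec_def)
  have eq: "(norm (X \<omega>))\<^sup>2 = (\<Sum>i\<in>UNIV. (axis i 1 \<bullet> X \<omega>)\<^sup>2)" for \<omega>
  proof -
    have "(norm (X \<omega>))\<^sup>2 = X \<omega> \<bullet> X \<omega>" by (simp add: power2_norm_eq_inner)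
    also have "\<dots> = (\<Sum>i\<in>UNIV. X \<omega> $ i * X \<omega> $ i)" by (simp add: inner_vec_def)
    also have "\<dots> = (\<Sum>i\<in>UNIV. (axis i 1 \<bullet> X \<omega>)\<^sup>2)" by (simp only: inner_axis') (simp add: power2_eq_square)
    finally show ?thesis .
  qed
  have "(\<integral>\<^sup>+ \<omega>. ennreal ((norm (X \<omega>))\<^sup>2) \<partial>M) = (\<integral>\<^sup>+ \<omega>. (\<Sum>i\<in>UNIV. ennreal ((axis i 1 \<bullet> X \<omega>)\<^sup>2)) \<partial>M)"
    by (simp add: eq sum_ennreal)
  also have "\<dots> = (\<Sum>i\<in>UNIV. \<integral>\<^sup>+ \<omega>. ennreal ((axis i 1 \<bullet> X \<omega>)\<^sup>2) \<partial>M)"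
    by (rule nn_integral_sum) measurable
  also have "\<dots> = (\<Sum>i\<in>UNIV. ennreal (axis i 1 \<bullet> (W *v axis i 1)))"
    by (intro sum.cong refl gauss_comp[OF g Wb a]) (simp add: axis_eq_0_iff)
  also have "\<dots> = ennreal (\<Sum>i\<in>UNIV. axis i 1 \<bullet> (W *v axis i (1::real)))"
  proof (intro sum_ennreal)
    fix i :: 3
    have "a * (axis i 1 \<bullet> axis i (1::real)) \<le> axis i 1 \<bullet> (W *v axis i 1)"
      using Wb unfolding loewner_between_def by blast
    moreover have "a * (axis i 1 \<bullet> axis i (1::real)) \<ge> 0" using a by simp
    ultimately show "0 \<le> axis i 1 \<bullet> (W *v axis i (1::real))" by linarith
  qed
  finally show ?thesis .
qed


lemma rot_inv: assumes "R \<in> SO3" shows "R *v (matrix_inv R *v x) = x"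
proof -
  have o: "transpose R ** R = mat 1" "R ** transpose R = mat 1"
    using assms by (auto simp: SO3_def rotation_matrix_def orthogonal_matrix_def)
  have "R ** matrix_inv R = mat 1 \<and> matrix_inv R ** R = mat 1"
    unfolding matrix_inv_def by (rule someI[of _ "transpose R"]) (use o in auto)
  then show ?thesis by (simp add: matrix_vector_mul_assoc)
qed

lemma rot_norm: assumes "R \<in> SO3" shows "norm (R *v x) = norm x"
proof -
  have "orthogonal_matrix R" using assms by (auto simp: SO3_def rotation_matrix_def)
  then have "orthogonal_transformation ((*v) R)"
    by (simp add: orthogonal_transformation_matrix)
  then show ?thesis by (simp add: orthogonal_transformation_norm)
qed

lemma mv_meas[measurable]: "f \<in> borel_measurable M \<Longrightarrow> (\<lambda>x. (f x :: real^3^3) *v c) \<in> borel_measurable M"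
  apply (rule borel_measurable_continuous_on[where f="\<lambda>A. A *v c"])
  unfolding matrix_vector_mult_def
  apply (intro continuous_intros)
  apply assumption done

lemma norm_sq_add: "(norm (a + b :: 'v::real_normed_vector))\<^sup>2 \<le> 2 * (norm a)\<^sup>2 + 2 * (norm b)\<^sup>2"
proof -
  have "norm (a+b) \<le> norm a + norm b" by (rule norm_triangle_ineq)
  then have "(norm (a+b))\<^sup>2 \<le> (norm a + norm b)\<^sup>2" by (simp add: power_mono)
  also have "\<dots> \<le> 2 * (norm a)\<^sup>2 + 2 * (norm b)\<^sup>2"
    by (smt (verit) sum_squares_bound power2_sum)
  finally show ?thesis .
qed

lemma step_identity:
  fixes t \<alpha> :: real and q v qh vh ub q' v' qs :: "real^3" and R R' :: "real^3^3"
  assumes t: "t > 0" and rot: "R \<in> SO3"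
    and dq: "q' = q + t *\<^sub>R v + (t\<^sup>2 / 2) *\<^sub>R (R *v track_ctrl t \<alpha> qs R qh vh - ub)"
  shows "q' - R' *v qs = (1 - \<alpha>) *\<^sub>R (q - R *v qs)
     + ((\<alpha> *\<^sub>R (q - qh) + t *\<^sub>R (v - vh) + (R - R') *v qs) + (- (t\<^sup>2 / 2)) *\<^sub>R ub)"
proof -
  have tc: "R *v track_ctrl t \<alpha> qs R qh vh = - ((2 * \<alpha> / t\<^sup>2) *\<^sub>R (qh - R *v qs)) - (2 / t) *\<^sub>R vh"
    unfolding track_ctrl_def
    by (simp add: matrix_vector_mult_diff_distrib matrix_vector_mult_scaleR rot_inv[OF rot]
        linear_neg[OF matrix_vector_mul_linear])
  have c1: "t\<^sup>2 / 2 * (2 * \<alpha> / t\<^sup>2) = \<alpha>" and c2: "t\<^sup>2 / 2 * (2 / t) = t"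
    using t by (auto simp: field_simps power2_eq_square)
  have "q' = q + t *\<^sub>R v - (t\<^sup>2 / 2 * (2 * \<alpha> / t\<^sup>2)) *\<^sub>R (qh - R *v qs) - (t\<^sup>2 / 2 * (2 / t)) *\<^sub>R vh - (t\<^sup>2 / 2) *\<^sub>R ub"
    unfolding dq tc by (simp add: algebra_simps)
  also have "\<dots> = q + t *\<^sub>R v - \<alpha> *\<^sub>R (qh - R *v qs) - t *\<^sub>R vh - (t\<^sup>2 / 2) *\<^sub>R ub"
    by (simp only: c1 c2)
  finally show ?thesis by (simp add: algebra_simps matrix_vector_mult_diff_rdistrib)
qed

theorem mainTheorem2:
  fixes M :: "'a measure"
    and t \<alpha> sig_lo sig_hi :: real
    and q v qh vh ubar :: "nat \<Rightarrow> 'a \<Rightarrow> real^3"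
    and R :: "nat \<Rightarrow> 'a \<Rightarrow> real^3^3"
    and W :: "real^3^3"
    and qs :: "real^3"
  assumes "prob_space M"
    and t_pos: "t > 0"
    and meas: "\<And>k. q k \<in> borel_measurable M" "\<And>k. v k \<in> borel_measurable M"
              "\<And>k. qh k \<in> borel_measurable M" "\<And>k. vh k \<in> borel_measurable M"
              "\<And>k. R k \<in> borel_measurable M"
    and rot: "\<And>k \<omega>. \<omega> \<in> space M \<Longrightarrow> R k \<omega> \<in> SO3"
    and dyn_q: "\<And>k \<omega>. \<omega> \<in> space M \<Longrightarrow>
        q (Suc k) \<omega> = q k \<omega> + t *\<^sub>R v k \<omega>
          + (t\<^sup>2 / 2) *\<^sub>R (R k \<omega> *v track_ctrl t \<alpha> qs (R k \<omega>) (qh k \<omega>) (vh k \<omega>) - ubar k \<omega>)"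
    and dyn_v: "\<And>k \<omega>. \<omega> \<in> space M \<Longrightarrow>
        v (Suc k) \<omega> = v k \<omega>
          + t *\<^sub>R (R k \<omega> *v track_ctrl t \<alpha> qs (R k \<omega>) (qh k \<omega>) (vh k \<omega>) - ubar k \<omega>)"
    and sig_pos: "sig_lo > 0" "sig_hi > 0"
    and W_bnd: "loewner_between sig_lo W sig_hi"
    and gauss: "\<And>k. gaussian_vec M (ubar k) W"
    and indep: "\<And>k. indep_rv M (ubar k)
                   (\<lambda>\<omega>. (q k \<omega>, v k \<omega>, qh k \<omega>, vh k \<omega>, R k \<omega>))"
    and init: "(\<integral>\<^sup>+ \<omega>. ennreal ((norm (q 0 \<omega>))\<^sup>2 + (norm (v 0 \<omega>))\<^sup>2) \<partial>M) < \<infinity>"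
    and sigma_fin: "(SUP k. 2 * (\<integral>\<^sup>+ \<omega>. ennreal ((norm (\<alpha> *\<^sub>R (q k \<omega> - qh k \<omega>)
                      + t *\<^sub>R (v k \<omega> - vh k \<omega>)
                      + (R k \<omega> - R (Suc k) \<omega>) *v qs))\<^sup>2) \<partial>M)) < \<infinity>"
    and alpha_rng: "1 - 1 / sqrt 2 < \<alpha>" "\<alpha> < 1 + 1 / sqrt 2"
  shows "2 * (1 - \<alpha>)\<^sup>2 - 1 < 0 \<and>
         (SUP k. \<integral>\<^sup>+ \<omega>. ennreal ((norm (q k \<omega> - R k \<omega> *v qs))\<^sup>2) \<partial>M) < \<infinity>"
proof -
  interpret P: prob_space M by fact
  note meas[measurable]
  have um[measurable]: "ubar k \<in> borel_measurable M" for k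
    using gauss[of k] by (simp add: gaussian_vec_def)
  define e where "e k \<omega> = q k \<omega> - R k \<omega> *v qs" for k \<omega>
  define d where "d k \<omega> = \<alpha> *\<^sub>R (q k \<omega> - qh k \<omega>) + t *\<^sub>R (v k \<omega> - vh k \<omega>)
                      + (R k \<omega> - R (Suc k) \<omega>) *v qs" for k \<omega>
  define E where "E k = (\<integral>\<^sup>+ \<omega>. ennreal ((norm (e k \<omega>))\<^sup>2) \<partial>M)" for k
  define \<kappa> where "\<kappa> = 2 * (1 - \<alpha>)\<^sup>2"
  have em[measurable]: "e k \<in> borel_measurable M" for k unfolding e_def by measurable
  have dm[measurable]: "d k \<in> borel_measurable M" for k unfolding d_def by measurable
  have "\<bar>1 - \<alpha>\<bar> < 1 / sqrt 2" using alpha_rng by auto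
  then have "\<bar>1 - \<alpha>\<bar>\<^sup>2 < (1 / sqrt 2)\<^sup>2" by (intro power_strict_mono) auto
  then have a2: "(1 - \<alpha>)\<^sup>2 < 1 / 2" by (simp add: power_divide)
  then have kap: "\<kappa> < 1" "0 \<le> \<kappa>" by (auto simp: \<kappa>_def)
  define Ur where "Ur = (\<Sum>i\<in>UNIV. axis i 1 \<bullet> (W *v axis i (1::real)))"
  have Ub: "(\<integral>\<^sup>+ \<omega>. ennreal ((norm (ubar k \<omega>))\<^sup>2) \<partial>M) = ennreal Ur" for k
    unfolding Ur_def by (rule gauss_norm[OF gauss W_bnd sig_pos(1)])
  obtain Sr where Sr: "0 \<le> Sr" "(SUP k. 2 * (\<integral>\<^sup>+ \<omega>. ennreal ((norm (d k \<omega>))\<^sup>2) \<partial>M)) = ennreal Sr"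
    using sigma_fin unfolding d_def by (cases rule: ennreal_cases) auto
  have Dk: "2 * (\<integral>\<^sup>+ \<omega>. ennreal ((norm (d k \<omega>))\<^sup>2) \<partial>M) \<le> ennreal Sr" for k
    unfolding Sr(2)[symmetric] by (rule SUP_upper) simp
  define Kr where "Kr = 2 * Sr + t ^ 4 * Ur"
  have Ur0: "0 \<le> Ur" unfolding Ur_def
  proof (intro sum_nonneg)
    fix i :: 3
    have "sig_lo * (axis i 1 \<bullet> axis i (1::real)) \<le> axis i 1 \<bullet> (W *v axis i 1)"
      using W_bnd unfolding loewner_between_def by blast
    moreover have "sig_lo * (axis i 1 \<bullet> axis i (1::real)) \<ge> 0" using sig_pos by simp
    ultimately show "0 \<le> axis i 1 \<bullet> (W *v axis i (1::real))" by linarith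
  qed
  have Kr0: "0 \<le> Kr" unfolding Kr_def using Sr(1) Ur0 by simp
  have pw: "(norm (e (Suc k) \<omega>))\<^sup>2 \<le> \<kappa> * (norm (e k \<omega>))\<^sup>2 + 4 * (norm (d k \<omega>))\<^sup>2 + t ^ 4 * (norm (ubar k \<omega>))\<^sup>2"
    if \<omega>: "\<omega> \<in> space M" for k \<omega>
  proof -
    have id: "e (Suc k) \<omega> = (1 - \<alpha>) *\<^sub>R e k \<omega> + (d k \<omega> + (- (t\<^sup>2 / 2)) *\<^sub>R ubar k \<omega>)"
      unfolding e_def d_def by (rule step_identity[OF t_pos rot[OF \<omega>] dyn_q[OF \<omega>]])
    have "(norm (e (Suc k) \<omega>))\<^sup>2 \<le> 2 * (norm ((1 - \<alpha>) *\<^sub>R e k \<omega>))\<^sup>2 + 2 * (norm (d k \<omega> + (- (t\<^sup>2 / 2)) *\<^sub>R ubar k \<omega>))\<^sup>2"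
      unfolding id by (rule norm_sq_add)
    also have "(norm (d k \<omega> + (- (t\<^sup>2 / 2)) *\<^sub>R ubar k \<omega>))\<^sup>2 \<le> 2 * (norm (d k \<omega>))\<^sup>2 + 2 * (norm ((- (t\<^sup>2 / 2)) *\<^sub>R ubar k \<omega>))\<^sup>2"
      by (rule norm_sq_add)
    finally have h: "(norm (e (Suc k) \<omega>))\<^sup>2 \<le> 2 * (norm ((1 - \<alpha>) *\<^sub>R e k \<omega>))\<^sup>2 + 2 * (2 * (norm (d k \<omega>))\<^sup>2 + 2 * (norm ((- (t\<^sup>2 / 2)) *\<^sub>R ubar k \<omega>))\<^sup>2)"
      by simp
    have n1: "(norm ((1 - \<alpha>) *\<^sub>R e k \<omega>))\<^sup>2 = (1 - \<alpha>)\<^sup>2 * (norm (e k \<omega>))\<^sup>2"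
      by (simp only: norm_scaleR power_mult_distrib power2_abs)
    have n2: "(norm ((- (t\<^sup>2 / 2)) *\<^sub>R ubar k \<omega>))\<^sup>2 = t ^ 4 / 4 * (norm (ubar k \<omega>))\<^sup>2"
      by (simp only: norm_scaleR power_mult_distrib power2_abs) (simp add: power_divide power2_eq_square eval_nat_numeral)
    show ?thesis using h unfolding n1 n2 \<kappa>_def by simp
  qed
  have step: "E (Suc k) \<le> ennreal \<kappa> * E k + ennreal Kr" for k
  proof -
    have "E (Suc k) \<le> (\<integral>\<^sup>+ \<omega>. ennreal \<kappa> * ennreal ((norm (e k \<omega>))\<^sup>2)
          + (2 * (2 * ennreal ((norm (d k \<omega>))\<^sup>2)) + ennreal (t ^ 4) * ennreal ((norm (ubar k \<omega>))\<^sup>2)) \<partial>M)"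
      unfolding E_def
    proof (rule nn_integral_mono)
      fix \<omega> assume "\<omega> \<in> space M"
      then have "ennreal ((norm (e (Suc k) \<omega>))\<^sup>2) \<le> ennreal (\<kappa> * (norm (e k \<omega>))\<^sup>2 + 4 * (norm (d k \<omega>))\<^sup>2 + t ^ 4 * (norm (ubar k \<omega>))\<^sup>2)"
        using pw by (intro ennreal_leI) auto
      also have "\<dots> = ennreal \<kappa> * ennreal ((norm (e k \<omega>))\<^sup>2)
          + (2 * (2 * ennreal ((norm (d k \<omega>))\<^sup>2)) + ennreal (t ^ 4) * ennreal ((norm (ubar k \<omega>))\<^sup>2))"
        using kap ennreal_mult'[of 4 "(norm (d k \<omega>))\<^sup>2"] by (simp add: ennreal_plus ennreal_mult[symmetric] add.assoc)
      finally show "ennreal ((norm (e (Suc k) \<omega>))\<^sup>2) \<le> \<dots>" .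
    qed
    also have "\<dots> = ennreal \<kappa> * E k + (2 * (2 * (\<integral>\<^sup>+ \<omega>. ennreal ((norm (d k \<omega>))\<^sup>2) \<partial>M))
          + ennreal (t ^ 4) * (\<integral>\<^sup>+ \<omega>. ennreal ((norm (ubar k \<omega>))\<^sup>2) \<partial>M))"
      unfolding E_def
      by (simp add: nn_integral_add nn_integral_cmult)
    also have "\<dots> \<le> ennreal \<kappa> * E k + (2 * ennreal Sr + ennreal (t ^ 4) * ennreal Ur)"
      using Dk[of k] Ub[of k] by (intro add_mono order_refl mult_left_mono) auto
    also have "\<dots> = ennreal \<kappa> * E k + ennreal Kr"
      unfolding Kr_def using Sr(1) Ur0 by (simp add: ennreal_plus ennreal_mult)
    finally show ?thesis .
  qed
  have E0: "E 0 < \<infinity>"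
  proof -
    have "E 0 \<le> (\<integral>\<^sup>+ \<omega>. ennreal 2 * ennreal ((norm (q 0 \<omega>))\<^sup>2 + (norm (v 0 \<omega>))\<^sup>2) + ennreal (2 * (norm qs)\<^sup>2) \<partial>M)"
      unfolding E_def
    proof (rule nn_integral_mono)
      fix \<omega> assume \<omega>: "\<omega> \<in> space M"
      have "(norm (e 0 \<omega>))\<^sup>2 \<le> 2 * (norm (q 0 \<omega>))\<^sup>2 + 2 * (norm (- (R 0 \<omega> *v qs)))\<^sup>2"
        unfolding e_def using norm_sq_add[of "q 0 \<omega>" "- (R 0 \<omega> *v qs)"] by simp
      also have "\<dots> \<le> 2 * ((norm (q 0 \<omega>))\<^sup>2 + (norm (v 0 \<omega>))\<^sup>2) + 2 * (norm qs)\<^sup>2"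
        using rot_norm[OF rot[OF \<omega>]] by simp
      finally show "ennreal ((norm (e 0 \<omega>))\<^sup>2) \<le> ennreal 2 * ennreal ((norm (q 0 \<omega>))\<^sup>2 + (norm (v 0 \<omega>))\<^sup>2) + ennreal (2 * (norm qs)\<^sup>2)"
      proof -
        assume h: "(norm (e 0 \<omega>))\<^sup>2 \<le> 2 * ((norm (q 0 \<omega>))\<^sup>2 + (norm (v 0 \<omega>))\<^sup>2) + 2 * (norm qs)\<^sup>2"
        have "ennreal ((norm (e 0 \<omega>))\<^sup>2) \<le> ennreal (2 * ((norm (q 0 \<omega>))\<^sup>2 + (norm (v 0 \<omega>))\<^sup>2) + 2 * (norm qs)\<^sup>2)"
          using h by (rule ennreal_leI)
        also have "\<dots> = ennreal 2 * ennreal ((norm (q 0 \<omega>))\<^sup>2 + (norm (v 0 \<omega>))\<^sup>2) + ennreal (2 * (norm qs)\<^sup>2)"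
          by (subst ennreal_plus) (auto simp: ennreal_mult)
        finally show ?thesis .
      qed
    qed
    also have "\<dots> = ennreal 2 * (\<integral>\<^sup>+ \<omega>. ennreal ((norm (q 0 \<omega>))\<^sup>2 + (norm (v 0 \<omega>))\<^sup>2) \<partial>M) + ennreal (2 * (norm qs)\<^sup>2)"
      by (simp add: nn_integral_add nn_integral_cmult P.emeasure_space_1)
    also have "\<dots> < \<infinity>" using init by (simp add: ennreal_mult_less_top)
    finally show ?thesis .
  qed
  obtain E0r where E0r: "0 \<le> E0r" "E 0 = ennreal E0r"
    using E0 by (cases "E 0" rule: ennreal_cases) auto
  define Bv where "Bv = max E0r (Kr / (1 - \<kappa>))"
  have bnd: "E k \<le> ennreal Bv" for k
  proof (induction k)
    case 0 then show ?case unfolding Bv_def E0r(2) by (intro ennreal_leI) simp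
  next
    case (Suc k)
    have "Kr / (1 - \<kappa>) \<le> Bv" by (simp add: Bv_def)
    then have "Kr \<le> (1 - \<kappa>) * Bv" using kap by (simp add: pos_divide_le_eq mult.commute)
    then have r: "\<kappa> * Bv + Kr \<le> Bv" by (simp add: algebra_simps)
    have Bv0: "0 \<le> Bv" using E0r(1) by (simp add: Bv_def)
    have "E (Suc k) \<le> ennreal \<kappa> * E k + ennreal Kr" by (rule step)
    also have "\<dots> \<le> ennreal \<kappa> * ennreal Bv + ennreal Kr"
      using Suc by (intro add_mono mult_left_mono) auto
    also have "\<dots> = ennreal (\<kappa> * Bv + Kr)" using kap Bv0 Kr0 by (simp add: ennreal_plus ennreal_mult)
    also have "\<dots> \<le> ennreal Bv" using r by (intro ennreal_leI)
    finally show ?case .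
  qed
  have "(SUP k. \<integral>\<^sup>+ \<omega>. ennreal ((norm (q k \<omega> - R k \<omega> *v qs))\<^sup>2) \<partial>M) = (SUP k. E k)"
    by (simp add: E_def e_def)
  also have "\<dots> \<le> ennreal Bv" using bnd by (intro SUP_least) auto
  also have "\<dots> < \<infinity>" by simp
  finally show ?thesis using a2 by simp
qed
end
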